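(* Let $\mathcal{X},\mathcal{Y}$ be finite, $m\ge1$, $Q$ a distribution on $\mathcal{X}$ with $Q(x)>0$ for all $x$, and $\mathbf x\in\mathcal{X}^m,\mathbf y\in\mathcal{Y}^m$. With $\tilde W(y|x)=\hat P_{\mathbf x,\mathbf y}(x,y)/Q(x)$, $$\tilde I(Q,\tilde W)=\frac1m\log_2\frac{\hat p(\mathbf x|\mathbf y)}{Q(\mathbf x)}.$$ Moreover, for every real $T$ and every $\mathbf y\in\mathcal{Y}^m$, if $\mathbf X=(X_1,\dots,X_m)$ is i.i.d. with law $Q$, then $$\Pr\left(\frac{\hat p(\mathbf X|\mathbf y)}{Q(\mathbf X)}\ge2^{mT}\right)\le2^{-(mT-k_0\log_2m-k_1)},\qquad k_0=k_1=(|\mathcal{X}|-1)|\mathcal{Y}|.$$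
   Context: $\hat P_{\mathbf x,\mathbf y}(x,y)=\frac1m\sum_{i=1}^m\mathbf 1(x_i=x,y_i=y)$ is the joint empirical distribution, $\hat P_{\mathbf y}(y)$ the empirical distribution of $\mathbf y$, and $\hat P_{\mathbf x|\mathbf y}(x|y)=\hat P_{\mathbf x,\mathbf y}(x,y)/\hat P_{\mathbf y}(y)$. The conditional empirical probability is $\hat p(\mathbf x|\mathbf y)=\prod_{i=1}^m\hat P_{\mathbf x|\mathbf y}(x_i|y_i)$, and $Q(\mathbf x)=\prod_{i=1}^mQ(x_i)$. The false mutual information of a non-negative function $\tilde W(y|x)$ is $\tilde I(Q,\tilde W)=\sum_{x,y}Q(x)\tilde W(y|x)\log_2\frac{\tilde W(y|x)}{\sum_{x'}Q(x')\tilde W(y|x')}$ with $0\log0=0$. *)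

theory Defs
  imports Complex_Main
begin

definition emp_joint :: "'x list \<Rightarrow> 'y list \<Rightarrow> 'x \<Rightarrow> 'y \<Rightarrow> real" where
  "emp_joint xs ys x y =
     real (card {i. i < length xs \<and> xs ! i = x \<and> ys ! i = y}) / real (length xs)"

definition emp_marg :: "'y list \<Rightarrow> 'y \<Rightarrow> real" where
  "emp_marg ys y = real (card {i. i < length ys \<and> ys ! i = y}) / real (length ys)"

definition emp_cond :: "'x list \<Rightarrow> 'y list \<Rightarrow> 'x \<Rightarrow> 'y \<Rightarrow> real" where
  "emp_cond xs ys x y = emp_joint xs ys x y / emp_marg ys y"

definition phat :: "'x list \<Rightarrow> 'y list \<Rightarrow> real" where
  "phat xs ys = (\<Prod>i<length xs. emp_cond xs ys (xs ! i) (ys ! i))"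

definition Qprod :: "('x \<Rightarrow> real) \<Rightarrow> 'x list \<Rightarrow> real" where
  "Qprod Q xs = (\<Prod>i<length xs. Q (xs ! i))"

text \<open>False mutual information, with 0 log 0 = 0; W y x stands for W(y|x).\<close>
definition false_MI :: "('x::finite \<Rightarrow> real) \<Rightarrow> ('y::finite \<Rightarrow> 'x \<Rightarrow> real) \<Rightarrow> real" where
  "false_MI Q W = (\<Sum>x\<in>UNIV. \<Sum>y\<in>UNIV. Q x * W y x *
      (if Q x * W y x = 0 then 0
       else log 2 (W y x / (\<Sum>x'\<in>UNIV. Q x' * W y x'))))"

definition iid_prob :: "('x \<Rightarrow> real) \<Rightarrow> nat \<Rightarrow> ('x list \<Rightarrow> bool) \<Rightarrow> real" where
  "iid_prob Q m E = (\<Sum>xs\<in>{xs. length xs = m \<and> E xs}. Qprod Q xs)"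

end

theory Submission
  imports Defs "HOL-Library.FuncSet"
begin

lemma card_filter_sum:
  "(of_nat (card {i. i < (m::nat) \<and> P i}) :: 'a::comm_semiring_1) = (\<Sum>i<m. if P i then 1 else 0)"
proof -
  have "{i. i < m \<and> P i} = {i\<in>{..<m}. P i}" by auto
  then have "(of_nat (card {i. i < m \<and> P i}) :: 'a) = (\<Sum>i\<in>{i\<in>{..<m}. P i}. 1)" by simp
  also have "\<dots> = (\<Sum>i<m. if P i then 1 else 0)" by (rule sum.inter_filter) simp
  finally show ?thesis .
qed

lemma card_filter_sum_real:
  "real (card {i. i < (m::nat) \<and> P i}) = (\<Sum>i<m. if P i then 1 else 0)"
proof -
  have "{i. i < m \<and> P i} = {i\<in>{..<m}. P i}" by auto
  then have "real (card {i. i < m \<and> P i}) = (\<Sum>i\<in>{i\<in>{..<m}. P i}. 1)" by simp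
  also have "\<dots> = (\<Sum>i<m. if P i then 1 else 0)" by (rule sum.inter_filter) simp
  finally show ?thesis .
qed

lemma sum_lists_prod:
  fixes f :: "nat \<Rightarrow> 'a::finite \<Rightarrow> real"
  shows "(\<Sum>X\<in>{X. length X = m}. \<Prod>i<m. f i (X!i)) = (\<Prod>i<m. \<Sum>x\<in>UNIV. f i x)"
proof (induction m arbitrary: f)
  case 0
  then show ?case by simp
next
  case (Suc m)
  have fin: "finite {X::'a list. length X = m}"
    using finite_lists_length_eq[OF finite_UNIV, of m] by simp
  have eq: "{X::'a list. length X = Suc m} = (\<lambda>(x,X). x # X) ` (UNIV \<times> {X. length X = m})"
    by (auto simp: length_Suc_conv image_iff)
  have inj: "inj_on (\<lambda>(x,X). x # (X::'a list)) (UNIV \<times> {X. length X = m})"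
    by (auto simp: inj_on_def)
  have "(\<Sum>X\<in>{X. length X = Suc m}. \<Prod>i<Suc m. f i (X!i))
      = (\<Sum>(x,X)\<in>UNIV \<times> {X. length X = m}. f 0 x * (\<Prod>i<m. f (Suc i) (X!i)))"
    unfolding eq by (subst sum.reindex[OF inj]) (simp add: prod.lessThan_Suc_shift case_prod_unfold del: prod.lessThan_Suc)
  also have "\<dots> = (\<Sum>x\<in>UNIV. \<Sum>X\<in>{X. length X = m}. f 0 x * (\<Prod>i<m. f (Suc i) (X!i)))"
    by (simp add: sum.cartesian_product)
  also have "\<dots> = (\<Sum>x\<in>UNIV. f 0 x) * (\<Prod>i<m. \<Sum>x\<in>UNIV. f (Suc i) x)"
    by (simp add: sum_distrib_left[symmetric] sum_distrib_right Suc.IH[of "\<lambda>i. f (Suc i)"])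
  also have "\<dots> = (\<Prod>i<Suc m. \<Sum>x\<in>UNIV. f i x)"
    by (simp add: prod.lessThan_Suc_shift del: prod.lessThan_Suc)
  finally show ?case .
qed


definition cnt :: "'x list \<Rightarrow> 'y list \<Rightarrow> 'x \<Rightarrow> 'y \<Rightarrow> nat" where
  "cnt X ys x y = card {i. i < length X \<and> X ! i = x \<and> ys ! i = y}"

lemma card_filter_sum_nat:
  "card {i. i < (m::nat) \<and> P i} = (\<Sum>i<m. if P i then 1 else 0)"
  using card_filter_sum[where 'a=nat, of m P] by (simp only: of_nat_id)

lemma sum_cnt:
  fixes X :: "'x::finite list"
  assumes "length X = length ys"
  shows "(\<Sum>x\<in>UNIV. cnt X ys x y) = card {i. i < length ys \<and> ys ! i = y}"
proof -
  have "(\<Sum>x\<in>UNIV. cnt X ys x y) = (\<Sum>x\<in>UNIV. \<Sum>i<length ys. if X ! i = x \<and> ys ! i = y then 1 else 0)"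
    unfolding cnt_def assms by (simp only: card_filter_sum_nat)
  also have "\<dots> = (\<Sum>i<length ys. \<Sum>x\<in>UNIV. if X ! i = x \<and> ys ! i = y then 1 else 0)"
    by (rule sum.swap)
  also have "\<dots> = (\<Sum>i<length ys. if ys ! i = y then 1 else 0)"
  proof (intro sum.cong refl)
    fix i
    show "(\<Sum>x\<in>UNIV. if X ! i = x \<and> ys ! i = y then 1 else 0) = (if ys ! i = y then 1 else (0::nat))"
    proof (cases "ys ! i = y")
      case True
      then show ?thesis by (simp add: sum.delta)
    qed simp
  qed
  also have "\<dots> = card {i. i < length ys \<and> ys ! i = y}"
    by (simp only: card_filter_sum_nat)
  finally show ?thesis .
qed

lemma cnt_le: "cnt X ys x y \<le> length X"
proof -
  have "cnt X ys x y \<le> card {..<length X}" unfolding cnt_def by (rule card_mono) auto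
  then show ?thesis by simp
qed

lemma emp_cond_cnt: "emp_cond X ys x y = real (cnt X ys x y) / real (length X) / emp_marg ys y"
  by (simp add: emp_cond_def emp_joint_def cnt_def)


lemma cnt_determined:
  fixes X X' :: "'x::finite list"
  assumes "length X = length ys" "length X' = length ys"
    and "\<And>x. x \<noteq> x0 \<Longrightarrow> cnt X ys x y = cnt X' ys x y"
  shows "cnt X ys x y = cnt X' ys x y"
proof (cases "x = x0")
  case True
  have "(\<Sum>x\<in>UNIV. cnt X ys x y) = (\<Sum>x\<in>UNIV. cnt X' ys x y)"
    using sum_cnt[OF assms(1)] sum_cnt[OF assms(2)] by simp
  moreover have "(\<Sum>x\<in>UNIV. cnt X ys x y) = cnt X ys x0 y + (\<Sum>x\<in>UNIV-{x0}. cnt X ys x y)"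
    by (simp add: sum.remove)
  moreover have "(\<Sum>x\<in>UNIV. cnt X' ys x y) = cnt X' ys x0 y + (\<Sum>x\<in>UNIV-{x0}. cnt X' ys x y)"
    by (simp add: sum.remove)
  moreover have "(\<Sum>x\<in>UNIV-{x0}. cnt X ys x y) = (\<Sum>x\<in>UNIV-{x0}. cnt X' ys x y)"
    using assms(3) by (intro sum.cong) auto
  ultimately show ?thesis using True by simp
qed (use assms(3) in auto)

lemma card_types:
  fixes ys :: "'y::finite list"
  shows "card ((\<lambda>X::'x::finite list. emp_cond X ys) ` {X. length X = length ys})
           \<le> (length ys + 1) ^ ((card (UNIV::'x set) - 1) * card (UNIV::'y set))"
proof -
  define x0 :: 'x where "x0 = undefined"
  define S where "S = {X::'x list. length X = length ys}"
  define A where "A = (UNIV - {x0}) \<times> (UNIV :: 'y set)"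
  define rc where "rc X = restrict (\<lambda>(x,y). cnt X ys x y) A" for X
  have V_eq: "emp_cond X ys = emp_cond X' ys" if "X \<in> S" "X' \<in> S" "rc X = rc X'" for X X'
  proof -
    have c: "cnt X ys x y = cnt X' ys x y" for x y
    proof (rule cnt_determined[of X ys X' x0])
      fix x assume "x \<noteq> x0"
      then have "(x,y) \<in> A" by (simp add: A_def)
      then show "cnt X ys x y = cnt X' ys x y"
        using fun_cong[OF that(3), of "(x,y)"] by (simp add: rc_def)
    qed (use that in \<open>auto simp: S_def\<close>)
    show ?thesis using that c by (auto simp: S_def emp_cond_cnt fun_eq_iff)
  qed
  define G where "G r = emp_cond (SOME X. X \<in> S \<and> rc X = r) ys" for r
  have G: "emp_cond X ys = G (rc X)" if "X \<in> S" for X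
  proof -
    have "\<exists>X'. X' \<in> S \<and> rc X' = rc X" using that by blast
    then have "(SOME X'. X' \<in> S \<and> rc X' = rc X) \<in> S \<and> rc (SOME X'. X' \<in> S \<and> rc X' = rc X) = rc X"
      by (rule someI_ex)
    then show ?thesis unfolding G_def using V_eq that by metis
  qed
  have img: "(\<lambda>X. emp_cond X ys) ` S = G ` (rc ` S)"
    using G by (auto simp: image_iff)
  have sub: "rc ` S \<subseteq> PiE A (\<lambda>_. {0..length ys})"
  proof
    fix r assume "r \<in> rc ` S"
    then obtain X where X: "X \<in> S" "r = rc X" by blast
    have "\<forall>i\<in>A. (\<lambda>(x,y). cnt X ys x y) i \<in> {0..length ys}"
      using X(1) cnt_le[of X ys] by (auto simp: S_def)
    then show "r \<in> PiE A (\<lambda>_. {0..length ys})"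
      unfolding X(2) rc_def by (simp only: restrict_PiE_iff)
  qed
  have finA: "finite A" by (simp add: A_def)
  have "card ((\<lambda>X. emp_cond X ys) ` S) \<le> card (rc ` S)"
    unfolding img by (rule card_image_le) (rule finite_subset[OF sub], simp add: finite_PiE finA)
  also have "\<dots> \<le> card (PiE A (\<lambda>_. {0..length ys}))"
    by (rule card_mono[OF _ sub]) (simp add: finite_PiE finA)
  also have "\<dots> = (length ys + 1) ^ card A"
    using finA by (simp add: card_PiE)
  also have "card A = (card (UNIV::'x set) - 1) * card (UNIV::'y set)"
    by (simp add: A_def card_cartesian_product card_Diff_singleton)
  finally show ?thesis by (simp add: S_def)
qed


lemma emp_cond_nonneg: "emp_cond X ys x y \<ge> 0"
  by (simp add: emp_cond_def emp_joint_def emp_marg_def)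

lemma row_sum:
  fixes X :: "'x::finite list"
  assumes "length X = length ys" "i < length ys"
  shows "(\<Sum>x\<in>UNIV. emp_cond X ys x (ys ! i)) = 1"
proof -
  define n where "n = card {j. j < length ys \<and> ys ! j = ys ! i}"
  have "n \<ge> 1"
  proof -
    have "finite {j. j < length ys \<and> ys ! j = ys ! i}" by simp
    moreover have "i \<in> {j. j < length ys \<and> ys ! j = ys ! i}" using assms by simp
    ultimately show ?thesis unfolding n_def
      by (metis One_nat_def Suc_leI card_gt_0_iff empty_iff)
  qed
  have L: "length ys > 0" using assms(2) by linarith
  have "(\<Sum>x\<in>UNIV. emp_cond X ys x (ys ! i))
      = (\<Sum>x\<in>UNIV. real (cnt X ys x (ys ! i))) / real (length ys) / emp_marg ys (ys ! i)"
    by (simp add: emp_cond_cnt assms(1) sum_divide_distrib)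
  also have "(\<Sum>x\<in>UNIV. real (cnt X ys x (ys ! i))) = real n"
    using sum_cnt[OF assms(1), of "ys ! i"] unfolding n_def by (metis of_nat_sum)
  also have "emp_marg ys (ys ! i) = real n / real (length ys)"
    by (simp add: emp_marg_def n_def)
  finally show ?thesis using \<open>n \<ge> 1\<close> L by simp
qed

lemma sum_phat_le:
  fixes ys :: "'y::finite list"
  shows "(\<Sum>X\<in>{X::'x::finite list. length X = length ys}. phat X ys)
     \<le> real (card ((\<lambda>X::'x list. emp_cond X ys) ` {X. length X = length ys}))"
proof -
  define S where "S = {X::'x list. length X = length ys}"
  define V where "V X = emp_cond X ys" for X :: "'x list"
  define n where "n = length ys"
  have finS: "finite S" unfolding S_def
    using finite_lists_length_eq[OF finite_UNIV, of "length ys"] by simp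
  have "(\<Sum>X\<in>S. phat X ys) = (\<Sum>v\<in>V ` S. \<Sum>X\<in>{X. X \<in> S \<and> V X = v}. phat X ys)"
    by (rule sum.image_gen[OF finS])
  also have "\<dots> = (\<Sum>v\<in>V ` S. \<Sum>X\<in>{X. X \<in> S \<and> V X = v}. \<Prod>i<n. v (X!i) (ys!i))"
    by (intro sum.cong refl) (auto simp: phat_def V_def S_def n_def)
  also have "\<dots> \<le> (\<Sum>v\<in>V ` S. \<Sum>X\<in>S. \<Prod>i<n. v (X!i) (ys!i))"
  proof (intro sum_mono sum_mono2[OF finS])
    fix v assume "v \<in> V ` S"
    then obtain X0 where "v = V X0" by blast
    then show "\<And>X. X \<in> S - {X \<in> S. V X = v} \<Longrightarrow> 0 \<le> (\<Prod>i<n. v (X!i) (ys!i))"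
      by (auto intro!: prod_nonneg simp: V_def emp_cond_nonneg)
  qed auto
  also have "\<dots> = (\<Sum>v\<in>V ` S. 1)"
  proof (intro sum.cong refl)
    fix v assume "v \<in> V ` S"
    then obtain X0 where X0: "X0 \<in> S" "v = V X0" by blast
    have "(\<Sum>X\<in>S. \<Prod>i<n. v (X!i) (ys!i)) = (\<Prod>i<n. \<Sum>x\<in>UNIV. v x (ys!i))"
      unfolding S_def n_def by (rule sum_lists_prod)
    also have "\<dots> = (\<Prod>i<n. 1)"
      using X0 by (intro prod.cong refl) (simp add: V_def S_def n_def row_sum)
    finally show "(\<Sum>X\<in>S. \<Prod>i<n. v (X!i) (ys!i)) = 1" by simp
  qed
  finally show ?thesis by (simp add: S_def V_def)
qed


lemma part2:
  fixes Q :: "'x::finite \<Rightarrow> real" and ys' :: "'y::finite list"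
  assumes "m \<ge> 1" and Qpos: "\<And>x. Q x > 0" and len: "length ys' = m"
  shows "iid_prob Q m (\<lambda>X. phat X ys' / Qprod Q X \<ge> 2 powr (real m * T))
             \<le> 2 powr (- (real m * T
                  - real ((card (UNIV::'x set) - 1) * card (UNIV::'y set)) * log 2 (real m)
                  - real ((card (UNIV::'x set) - 1) * card (UNIV::'y set))))"
proof -
  define k where "k = (card (UNIV::'x set) - 1) * card (UNIV::'y set)"
  define S where "S = {X::'x list. length X = m}"
  define c where "c = 2 powr (- (real m * T))"
  have cpos: "c > 0" by (simp add: c_def)
  have finS: "finite S" unfolding S_def
    using finite_lists_length_eq[OF finite_UNIV, of m] by simp
  have Qp: "Qprod Q X > 0" for X unfolding Qprod_def by (rule prod_pos) (simp add: Qpos)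
  have phat_nn: "phat X ys' \<ge> 0" for X :: "'x list"
    unfolding phat_def by (rule prod_nonneg) (simp add: emp_cond_nonneg)
  have "iid_prob Q m (\<lambda>X. phat X ys' / Qprod Q X \<ge> 2 powr (real m * T))
      = (\<Sum>X\<in>{X \<in> S. 2 powr (real m * T) \<le> phat X ys' / Qprod Q X}. Qprod Q X)"
    unfolding iid_prob_def S_def by (rule sum.cong) auto
  also have "\<dots> \<le> (\<Sum>X\<in>{X \<in> S. 2 powr (real m * T) \<le> phat X ys' / Qprod Q X}. c * phat X ys')"
  proof (rule sum_mono)
    fix X assume "X \<in> {X \<in> S. 2 powr (real m * T) \<le> phat X ys' / Qprod Q X}"
    then have "2 powr (real m * T) * Qprod Q X \<le> phat X ys'"
      using Qp[of X] by (simp add: pos_le_divide_eq)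
    then have "c * (2 powr (real m * T) * Qprod Q X) \<le> c * phat X ys'"
      using cpos by simp
    moreover have "c * 2 powr (real m * T) = 1"
      by (simp add: c_def powr_add[symmetric])
    ultimately show "Qprod Q X \<le> c * phat X ys'" by (simp add: mult.assoc[symmetric])
  qed
  also have "\<dots> \<le> (\<Sum>X\<in>S. c * phat X ys')"
    by (rule sum_mono2[OF finS]) (auto intro!: mult_nonneg_nonneg phat_nn simp: less_imp_le[OF cpos])
  also have "\<dots> = c * (\<Sum>X\<in>S. phat X ys')" by (simp add: sum_distrib_left)
  also have "\<dots> \<le> c * real ((m + 1) ^ k)"
  proof -
    have "(\<Sum>X\<in>S. phat X ys') \<le> real (card ((\<lambda>X::'x list. emp_cond X ys') ` S))"
      using sum_phat_le[of ys', where 'x='x] by (simp add: S_def len)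
    also have "\<dots> \<le> real ((m + 1) ^ k)"
    proof -
      have "card ((\<lambda>X::'x list. emp_cond X ys') ` S) \<le> (m + 1) ^ k"
        using card_types[of ys', where 'x='x] by (simp add: S_def len k_def)
      then show ?thesis by (simp only: of_nat_le_iff)
    qed
    finally show ?thesis using cpos by simp
  qed
  also have "\<dots> \<le> c * (2 * real m) ^ k"
  proof -
    have "real ((m + 1) ^ k) = (real m + 1) ^ k" by (simp add: add.commute)
    also have "\<dots> \<le> (2 * real m) ^ k"
      by (rule power_mono) (use assms(1) in auto)
    finally show ?thesis using cpos by simp
  qed
  also have "\<dots> = 2 powr (- (real m * T - real k * log 2 (real m) - real k))"
  proof -
    have mpos: "real m > 0" using assms(1) by simp
    have "2 powr (- (real m * T - real k * log 2 (real m) - real k))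
        = c * (2 powr (log 2 (real m) * real k)) * 2 powr (real k)"
      by (simp add: c_def powr_add[symmetric] algebra_simps)
    also have "2 powr (log 2 (real m) * real k) = real m ^ k"
      using mpos by (simp add: powr_powr[symmetric] powr_realpow)
    also have "(2::real) powr (real k) = 2 ^ k" by (simp add: powr_realpow)
    finally show ?thesis by (simp add: power_mult_distrib)
  qed
  finally show ?thesis by (simp add: k_def)
qed


lemma emp_cond_pos:
  assumes "length X = length ys" "i < length X"
  shows "emp_cond X ys (X ! i) (ys ! i) > 0"
proof -
  have f1: "finite {j. j < length X \<and> X ! j = X ! i \<and> ys ! j = ys ! i}" by simp
  have "i \<in> {j. j < length X \<and> X ! j = X ! i \<and> ys ! j = ys ! i}" using assms by simp
  then have a: "card {j. j < length X \<and> X ! j = X ! i \<and> ys ! j = ys ! i} > 0"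
    using f1 card_gt_0_iff by blast
  have f2: "finite {j. j < length ys \<and> ys ! j = ys ! i}" by simp
  have "i \<in> {j. j < length ys \<and> ys ! j = ys ! i}" using assms by simp
  then have b: "card {j. j < length ys \<and> ys ! j = ys ! i} > 0"
    using f2 card_gt_0_iff by blast
  have L: "length X > 0" using assms(2) by linarith
  show ?thesis using a b L assms(1)
    by (simp add: emp_cond_def emp_joint_def emp_marg_def)
qed

lemma sum_by_type:
  fixes xs :: "'x::finite list" and ys :: "'y::finite list"
  assumes "length ys = length xs"
  shows "(\<Sum>i<length xs. h (xs ! i) (ys ! i)) = (\<Sum>x\<in>UNIV. \<Sum>y\<in>UNIV. real (cnt xs ys x y) * (h x y :: real))"
proof -
  have "(\<Sum>x\<in>UNIV. \<Sum>y\<in>UNIV. real (cnt xs ys x y) * h x y)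
     = (\<Sum>x\<in>UNIV. \<Sum>y\<in>UNIV. \<Sum>i<length xs. (if xs ! i = x \<and> ys ! i = y then h x y else 0))"
    unfolding cnt_def card_filter_sum_real sum_distrib_right by (intro sum.cong refl) auto
  also have "\<dots> = (\<Sum>x\<in>UNIV. \<Sum>i<length xs. \<Sum>y\<in>UNIV. (if xs ! i = x \<and> ys ! i = y then h x y else 0))"
    by (intro sum.cong refl sum.swap)
  also have "\<dots> = (\<Sum>i<length xs. \<Sum>x\<in>UNIV. \<Sum>y\<in>UNIV. (if xs ! i = x \<and> ys ! i = y then h x y else 0))"
    by (rule sum.swap)
  also have "\<dots> = (\<Sum>i<length xs. h (xs ! i) (ys ! i))"
  proof (intro sum.cong refl)
    fix i
    have "(\<Sum>x\<in>UNIV. \<Sum>y\<in>UNIV. (if xs ! i = x \<and> ys ! i = y then h x y else 0))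
        = (\<Sum>x\<in>UNIV. if xs ! i = x then (\<Sum>y\<in>UNIV. if ys ! i = y then h x y else 0) else 0)"
      by (intro sum.cong refl) auto
    also have "\<dots> = (\<Sum>y\<in>UNIV. if ys ! i = y then h (xs ! i) y else 0)"
      by (simp add: sum.delta)
    also have "\<dots> = h (xs ! i) (ys ! i)" by (simp add: sum.delta)
    finally show "(\<Sum>x\<in>UNIV. \<Sum>y\<in>UNIV. (if xs ! i = x \<and> ys ! i = y then h x y else 0)) = h (xs ! i) (ys ! i)" .
  qed
  finally show ?thesis by simp
qed

lemma part1:
  fixes Q :: "'x::finite \<Rightarrow> real" and xs :: "'x list" and ys :: "'y::finite list"
  assumes "m \<ge> 1" and Qpos: "\<And>x. Q x > 0"
    and lx: "length xs = m" and ly: "length ys = m"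
  shows "false_MI Q (\<lambda>y x. emp_joint xs ys x y / Q x)
           = (1 / real m) * log 2 (phat xs ys / Qprod Q xs)"
proof -
  define P where "P x y = emp_joint xs ys x y" for x y
  define L where "L x y = log 2 (emp_cond xs ys x y / Q x)" for x y
  have mpos: "real m > 0" using assms(1) by simp
  have P_cnt: "P x y = real (cnt xs ys x y) / real m" for x y
    by (simp add: P_def emp_joint_def cnt_def lx)
  have QW: "Q x * (P x y / Q x) = P x y" for x y using Qpos[of x] by simp
  have marg: "(\<Sum>x'\<in>UNIV. Q x' * (P x' y / Q x')) = emp_marg ys y" for y
  proof -
    have "(\<Sum>x'\<in>UNIV. Q x' * (P x' y / Q x')) = (\<Sum>x'\<in>UNIV. real (cnt xs ys x' y)) / real m"
      using Qpos by (simp add: P_cnt sum_divide_distrib less_imp_neq[symmetric])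
    also have "(\<Sum>x'\<in>UNIV. real (cnt xs ys x' y)) = real (card {i. i < length ys \<and> ys ! i = y})"
      using sum_cnt[of xs ys y] lx ly by (metis of_nat_sum)
    finally show ?thesis by (simp add: emp_marg_def ly)
  qed
  have "false_MI Q (\<lambda>y x. emp_joint xs ys x y / Q x)
      = (\<Sum>x\<in>UNIV. \<Sum>y\<in>UNIV. P x y * L x y)"
    unfolding false_MI_def P_def[symmetric]
  proof (intro sum.cong refl)
    fix x y
    show "Q x * (P x y / Q x) * (if Q x * (P x y / Q x) = 0 then 0
            else log 2 (P x y / Q x / (\<Sum>x'\<in>UNIV. Q x' * (P x' y / Q x')))) = P x y * L x y"
    proof -
      have m2: "(\<Sum>x'\<in>UNIV. emp_joint xs ys x' y) = emp_marg ys y"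
        using marg[of y] QW by (simp add: P_def)
      show ?thesis
        unfolding QW marg L_def using m2 by (simp add: P_def emp_cond_def divide_simps mult.commute)
    qed
  qed
  also have "\<dots> = (\<Sum>x\<in>UNIV. \<Sum>y\<in>UNIV. real (cnt xs ys x y) * L x y) / real m"
    by (simp add: P_cnt sum_divide_distrib)
  also have "(\<Sum>x\<in>UNIV. \<Sum>y\<in>UNIV. real (cnt xs ys x y) * L x y) = (\<Sum>i<m. L (xs ! i) (ys ! i))"
    using sum_by_type[of ys xs L] lx ly by simp
  also have "(\<Sum>i<m. L (xs ! i) (ys ! i)) = log 2 (\<Prod>i<m. emp_cond xs ys (xs ! i) (ys ! i) / Q (xs ! i))"
  proof -
    have pos: "emp_cond xs ys (xs ! i) (ys ! i) / Q (xs ! i) > 0" if "i \<in> {..<m}" for i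
      using emp_cond_pos[of xs ys i] that lx ly Qpos[of "xs ! i"] by simp
    have "log 2 (\<Prod>i<m. emp_cond xs ys (xs ! i) (ys ! i) / Q (xs ! i))
        = ln (\<Prod>i<m. emp_cond xs ys (xs ! i) (ys ! i) / Q (xs ! i)) / ln 2"
      by (simp add: log_def)
    also have "\<dots> = (\<Sum>i<m. ln (emp_cond xs ys (xs ! i) (ys ! i) / Q (xs ! i))) / ln 2"
      by (subst ln_prod) (use pos in \<open>auto simp: less_le\<close>)
    also have "\<dots> = (\<Sum>i<m. L (xs ! i) (ys ! i))"
      by (simp add: L_def log_def sum_divide_distrib)
    finally show ?thesis by simp
  qed
  also have "(\<Prod>i<m. emp_cond xs ys (xs ! i) (ys ! i) / Q (xs ! i)) = phat xs ys / Qprod Q xs"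
    by (simp add: prod_dividef phat_def Qprod_def lx)
  finally show ?thesis by simp
qed


theorem lemma7:
  fixes Q :: "'x::finite \<Rightarrow> real" and xs :: "'x list" and ys :: "'y::finite list" and m :: nat
  assumes "m \<ge> 1"
    and "\<And>x. Q x > 0" and "(\<Sum>x\<in>UNIV. Q x) = 1"
    and "length xs = m" and "length ys = m"
  shows "false_MI Q (\<lambda>y x. emp_joint xs ys x y / Q x)
           = (1 / real m) * log 2 (phat xs ys / Qprod Q xs)
     \<and> (\<forall>(T::real) (ys'::'y list). length ys' = m \<longrightarrow>
           iid_prob Q m (\<lambda>X. phat X ys' / Qprod Q X \<ge> 2 powr (real m * T))
             \<le> 2 powr (- (real m * T
                  - real ((card (UNIV::'x set) - 1) * card (UNIV::'y set)) * log 2 (real m)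
                  - real ((card (UNIV::'x set) - 1) * card (UNIV::'y set)))))"
proof (intro conjI allI impI)
  show "false_MI Q (\<lambda>y x. emp_joint xs ys x y / Q x) = (1 / real m) * log 2 (phat xs ys / Qprod Q xs)"
    by (rule part1[OF assms(1,2,4,5)])
next
  fix T :: real and ys' :: "'y list"
  assume "length ys' = m"
  then show "iid_prob Q m (\<lambda>X. phat X ys' / Qprod Q X \<ge> 2 powr (real m * T))
             \<le> 2 powr (- (real m * T
                  - real ((card (UNIV::'x set) - 1) * card (UNIV::'y set)) * log 2 (real m)
                  - real ((card (UNIV::'x set) - 1) * card (UNIV::'y set))))"
    by (rule part2[OF assms(1,2)])
qed

end
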